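(* Let $G$ be a $\tau$-regular graph with node set $V=S\cup T$ ($S,T$ nonempty, disjoint) and node features $X\in\mathbb{R}^{|V|\times d}$ with nonnegative entries. Consider the two-patch PatchGT computation: a node-level GNN $f^{\mathrm{GNN}}$ of $L$ layers $H_{l+1}=\sigma(H_lW_{1l}^\top+AH_lW_{2l}^\top)$ ($\sigma$ = ReLU, $\|W_{1l}\|_{1\to1},\|W_{2l}\|_{1\to1}\le1$), patch representations $z_S=\frac{1}{|V|}\sum_{i\in S}f_i^{\mathrm{GNN}}(X)$, $z_T=\frac{1}{|V|}\sum_{i\in T}f_i^{\mathrm{GNN}}(X)$, and a patch-level layer $g_T^{\mathrm{GNN}}(X)=\sigma(z_TW_1^\top+z_SW_2^\top)$ with $W_1,W_2\in\mathbb{R}^{d\times d}$. Define $\eta_{S\to T}=\max_{\alpha}\|g_T^{\mathrm{GNN}}(X+\alpha)-g_T^{\mathrm{GNN}}(X)\|_1$ over all $\alpha$ with $|\alpha_{ij}|\le\epsilon$ for $i\in S$ and $\alpha_{ij}=0$ for $i\in T$, and $\eta_{T\to T}=\max_{\beta}\|g_T^{\mathrm{GNN}}(X+\beta)-g_T^{\mathrm{GNN}}(X)\|_1$ over all $\beta$ with $|\beta_{ij}|\le\epsilon$ for $i\in T$ and $\beta_{ij}=0$ for $i\in S$ (with $\epsilon>0$). Then for every $\delta>0$ there exist parameters $(W_{1l},W_{2l})_l$, $W_1$, $W_2$ such that $\big|\eta_{S\to T}/\eta_{T\to T}-1\big|<\delta$; i.e. the ratio $\eta_{S\to T}/\eta_{T\to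 T}$ can be made arbitrarily close to $1$.
   Context: $f_i^{\mathrm{GNN}}(X)\in\mathbb{R}^{1\times d}$ denotes the row of the final layer output $H_L$ at node $i$, computed from input features $X$. For $W\in\mathbb{R}^{d\times d}$, $\|W\|_{1\to1}=\max_k\sum_j|W_{jk}|$. For a row vector $y$, $\|y\|_1=\sum_j|y_j|$. *)

theory Defs
  imports Complex_Main
begin

text \<open>Nodes form a finite type 'v (so V = UNIV); feature
  coordinates form a finite type 'k (so d = CARD('k) \<ge> 1).
  A feature matrix H \<in> R^{|V| x d} is a function H :: 'v \<Rightarrow> 'k \<Rightarrow> real (H i j = H_ij);
  a weight matrix W \<in> R^{d x d} is W :: 'k \<Rightarrow> 'k \<Rightarrow> real (W j k = W_jk).\<close>

definition relu :: "real \<Rightarrow> real" where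
  "relu x = max 0 x"

definition adj :: "('v \<Rightarrow> 'v \<Rightarrow> bool) \<Rightarrow> 'v \<Rightarrow> 'v \<Rightarrow> real" where
  "adj E i m = (if E i m then 1 else 0)"

definition norm11 :: "('k::finite \<Rightarrow> 'k \<Rightarrow> real) \<Rightarrow> real" where
  "norm11 W = Max (range (\<lambda>k. \<Sum>j\<in>UNIV. \<bar>W j k\<bar>))"

definition gnn_layer ::
  "('v::finite \<Rightarrow> 'v \<Rightarrow> bool) \<Rightarrow> ('k::finite \<Rightarrow> 'k \<Rightarrow> real) \<Rightarrow> ('k \<Rightarrow> 'k \<Rightarrow> real)
    \<Rightarrow> ('v \<Rightarrow> 'k \<Rightarrow> real) \<Rightarrow> ('v \<Rightarrow> 'k \<Rightarrow> real)" where
  "gnn_layer E W1 W2 H i k =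
     relu ((\<Sum>j\<in>UNIV. H i j * W1 k j) + (\<Sum>m\<in>UNIV. adj E i m * (\<Sum>j\<in>UNIV. H m j * W2 k j)))"

fun gnn ::
  "('v::finite \<Rightarrow> 'v \<Rightarrow> bool) \<Rightarrow> (('k::finite \<Rightarrow> 'k \<Rightarrow> real) \<times> ('k \<Rightarrow> 'k \<Rightarrow> real)) list
    \<Rightarrow> ('v \<Rightarrow> 'k \<Rightarrow> real) \<Rightarrow> ('v \<Rightarrow> 'k \<Rightarrow> real)" where
  "gnn E [] H = H"
| "gnn E (w # ws) H = gnn E ws (gnn_layer E (fst w) (snd w) H)"

definition patch_rep ::
  "('v::finite \<Rightarrow> 'v \<Rightarrow> bool) \<Rightarrow> (('k::finite \<Rightarrow> 'k \<Rightarrow> real) \<times> ('k \<Rightarrow> 'k \<Rightarrow> real)) list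
    \<Rightarrow> ('v \<Rightarrow> 'k \<Rightarrow> real) \<Rightarrow> 'v set \<Rightarrow> 'k \<Rightarrow> real" where
  "patch_rep E Ws X P k = (1 / real (card (UNIV :: 'v set))) * (\<Sum>i\<in>P. gnn E Ws X i k)"

definition gT ::
  "('v::finite \<Rightarrow> 'v \<Rightarrow> bool) \<Rightarrow> (('k::finite \<Rightarrow> 'k \<Rightarrow> real) \<times> ('k \<Rightarrow> 'k \<Rightarrow> real)) list
    \<Rightarrow> ('k \<Rightarrow> 'k \<Rightarrow> real) \<Rightarrow> ('k \<Rightarrow> 'k \<Rightarrow> real) \<Rightarrow> 'v set \<Rightarrow> 'v set
    \<Rightarrow> ('v \<Rightarrow> 'k \<Rightarrow> real) \<Rightarrow> 'k \<Rightarrow> real" where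
  "gT E Ws W1 W2 S T X k =
     relu ((\<Sum>j\<in>UNIV. patch_rep E Ws X T j * W1 k j) + (\<Sum>j\<in>UNIV. patch_rep E Ws X S j * W2 k j))"

definition l1norm :: "('k::finite \<Rightarrow> real) \<Rightarrow> real" where
  "l1norm y = (\<Sum>k\<in>UNIV. \<bar>y k\<bar>)"

definition perturbations :: "real \<Rightarrow> 'v set \<Rightarrow> ('v \<Rightarrow> 'k \<Rightarrow> real) set" where
  "perturbations eps P = {\<alpha>. (\<forall>i j. i \<in> P \<longrightarrow> \<bar>\<alpha> i j\<bar> \<le> eps) \<and> (\<forall>i j. i \<notin> P \<longrightarrow> \<alpha> i j = 0)}"

text \<open>eta_{P->T}: maximal l1 change of g_T under perturbations supported on P
  (the maximum is attained; we write it as a supremum).\<close>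
definition eta ::
  "('v::finite \<Rightarrow> 'v \<Rightarrow> bool) \<Rightarrow> (('k::finite \<Rightarrow> 'k \<Rightarrow> real) \<times> ('k \<Rightarrow> 'k \<Rightarrow> real)) list
    \<Rightarrow> ('k \<Rightarrow> 'k \<Rightarrow> real) \<Rightarrow> ('k \<Rightarrow> 'k \<Rightarrow> real) \<Rightarrow> 'v set \<Rightarrow> 'v set
    \<Rightarrow> ('v \<Rightarrow> 'k \<Rightarrow> real) \<Rightarrow> real \<Rightarrow> 'v set \<Rightarrow> real" where
  "eta E Ws W1 W2 S T X eps P =
     (SUP \<alpha>\<in>perturbations eps P.
        l1norm (\<lambda>k. gT E Ws W1 W2 S T (\<lambda>i j. X i j + \<alpha> i j) k - gT E Ws W1 W2 S T X k))"

end

theory Submission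
  imports Defs
begin

definition Id1 :: "real \<Rightarrow> 'k \<Rightarrow> 'k \<Rightarrow> real" where "Id1 c k j = (if k = j then c else 0)"

lemma layer_id: "gnn_layer E (Id1 1) (\<lambda>_ _. 0) H i k = relu (H i k)"
  unfolding gnn_layer_def Id1_def by (simp add: if_distrib cong: if_cong)

lemma relu_lip: "\<bar>relu a - relu b\<bar> \<le> \<bar>a - b\<bar>"
  unfolding relu_def by auto

lemma gnn_lip:
  "\<bar>gnn E (replicate L (Id1 1, \<lambda>_ _. 0)) A i k - gnn E (replicate L (Id1 1, \<lambda>_ _. 0)) B i k\<bar>
     \<le> \<bar>A i k - B i k\<bar>"
proof (induction L arbitrary: A B)
  case 0 then show ?case by simp
next
  case (Suc L)
  have "\<bar>gnn E (replicate (Suc L) (Id1 1, \<lambda>_ _. 0)) A i k - gnn E (replicate (Suc L) (Id1 1, \<lambda>_ _. 0)) B i k\<bar>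
    \<le> \<bar>gnn_layer E (Id1 1) (\<lambda>_ _. 0) A i k - gnn_layer E (Id1 1) (\<lambda>_ _. 0) B i k\<bar>"
    using Suc.IH by simp
  also have "\<dots> \<le> \<bar>A i k - B i k\<bar>" unfolding layer_id by (rule relu_lip)
  finally show ?case .
qed

lemma gnn_nonneg:
  assumes "\<And>i j. H i j \<ge> 0"
  shows "gnn E (replicate L (Id1 1, \<lambda>_ _. 0)) H = H"
  using assms
proof (induction L arbitrary: H)
  case 0 then show ?case by simp
next
  case (Suc L)
  have "gnn_layer E (Id1 1) (\<lambda>_ _. 0) H = H"
    using Suc.prems by (auto simp: layer_id relu_def fun_eq_iff)
  then show ?case using Suc by simp
qed

lemma key:
  fixes E :: "'v::finite \<Rightarrow> 'v \<Rightarrow> bool" and X :: "'v \<Rightarrow> 'k::finite \<Rightarrow> real" and L :: nat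
  assumes disj: "A \<inter> B = {}" and cover: "A \<union> B = UNIV"
    and X_nonneg: "\<And>i j. X i j \<ge> 0" and eps_pos: "eps > 0"
  defines "G \<equiv> gnn E (replicate L (Id1 1, \<lambda>_ _. 0))"
  defines "n \<equiv> real (card (UNIV :: 'v set))"
  defines "h \<equiv> (\<lambda>Y k. relu ((real (card A) * (\<Sum>i\<in>B. G Y i k) + real (card B) * (\<Sum>i\<in>A. G Y i k)) / n))"
  shows "(SUP \<alpha>\<in>perturbations eps A. l1norm (\<lambda>k. h (\<lambda>i j. X i j + \<alpha> i j) k - h X k))
        = real (card (UNIV :: 'k set)) * real (card A) * real (card B) * eps / n"
proof -
  have npos: "n > 0" unfolding n_def by (simp add: finite_UNIV_card_ge_0)
  let ?C = "real (card (UNIV :: 'k set)) * real (card A) * real (card B) * eps / n"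
  have bound: "l1norm (\<lambda>k. h (\<lambda>i j. X i j + \<alpha> i j) k - h X k) \<le> ?C"
    if a: "\<alpha> \<in> perturbations eps A" for \<alpha>
  proof -
    have aA: "\<And>i j. i \<in> A \<Longrightarrow> \<bar>\<alpha> i j\<bar> \<le> eps" and aB: "\<And>i j. i \<notin> A \<Longrightarrow> \<alpha> i j = 0"
      using a unfolding perturbations_def by auto
    have eqB: "G (\<lambda>i j. X i j + \<alpha> i j) i k = G X i k" if "i \<in> B" for i k
    proof -
      have "\<bar>G (\<lambda>i j. X i j + \<alpha> i j) i k - G X i k\<bar> \<le> \<bar>X i k + \<alpha> i k - X i k\<bar>"
        unfolding G_def by (rule gnn_lip)
      moreover have "i \<notin> A" using that disj by auto
      ultimately show ?thesis using aB[of i k] by auto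
    qed
    have each: "\<bar>h (\<lambda>i j. X i j + \<alpha> i j) k - h X k\<bar> \<le> real (card A) * real (card B) * eps / n" for k
    proof -
      have "\<bar>h (\<lambda>i j. X i j + \<alpha> i j) k - h X k\<bar>
          \<le> \<bar>real (card B) * (\<Sum>i\<in>A. G (\<lambda>i j. X i j + \<alpha> i j) i k - G X i k) / n\<bar>"
      proof -
        have sBeq: "(\<Sum>i\<in>B. G (\<lambda>i j. X i j + \<alpha> i j) i k) = (\<Sum>i\<in>B. G X i k)"
          using eqB by (rule sum.cong[OF refl])
        have "(real (card A) * (\<Sum>i\<in>B. G (\<lambda>i j. X i j + \<alpha> i j) i k) + real (card B) * (\<Sum>i\<in>A. G (\<lambda>i j. X i j + \<alpha> i j) i k)) / n
            - (real (card A) * (\<Sum>i\<in>B. G X i k) + real (card B) * (\<Sum>i\<in>A. G X i k)) / n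
            = real (card B) * (\<Sum>i\<in>A. G (\<lambda>i j. X i j + \<alpha> i j) i k - G X i k) / n"
          unfolding sBeq sum_subtractf using npos by (simp add: diff_divide_distrib[symmetric] right_diff_distrib)
        note deq = this
        show ?thesis unfolding h_def deq[symmetric] by (rule relu_lip)
      qed
      also have "\<dots> = real (card B) * \<bar>\<Sum>i\<in>A. G (\<lambda>i j. X i j + \<alpha> i j) i k - G X i k\<bar> / n"
        using npos by (simp add: abs_mult)
      also have "\<dots> \<le> real (card B) * (real (card A) * eps) / n"
      proof -
        have "\<bar>\<Sum>i\<in>A. G (\<lambda>i j. X i j + \<alpha> i j) i k - G X i k\<bar> \<le> (\<Sum>i\<in>A. \<bar>G (\<lambda>i j. X i j + \<alpha> i j) i k - G X i k\<bar>)"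
          by (rule sum_abs)
        also have "\<dots> \<le> (\<Sum>i\<in>A. eps)"
        proof (rule sum_mono)
          fix i assume "i \<in> A"
          have "\<bar>G (\<lambda>i j. X i j + \<alpha> i j) i k - G X i k\<bar> \<le> \<bar>X i k + \<alpha> i k - X i k\<bar>"
            unfolding G_def by (rule gnn_lip)
          with aA[OF \<open>i \<in> A\<close>, of k] show "\<bar>G (\<lambda>i j. X i j + \<alpha> i j) i k - G X i k\<bar> \<le> eps" by simp
        qed
        also have "\<dots> = real (card A) * eps" by simp
        finally have le: "\<bar>\<Sum>i\<in>A. G (\<lambda>i j. X i j + \<alpha> i j) i k - G X i k\<bar> \<le> real (card A) * eps" .
        show ?thesis
          by (rule divide_right_mono[OF mult_left_mono[OF le]]) (use npos in auto)
      qed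
      finally show ?thesis by (simp add: ac_simps)
    qed
    have "l1norm (\<lambda>k. h (\<lambda>i j. X i j + \<alpha> i j) k - h X k) \<le> (\<Sum>k\<in>(UNIV::'k set). real (card A) * real (card B) * eps / n)"
      unfolding l1norm_def by (rule sum_mono) (rule each)
    also have "\<dots> = ?C" by simp
    finally show ?thesis .
  qed
  define \<alpha>0 where "\<alpha>0 = (\<lambda>(i::'v) (j::'k). if i \<in> A then eps else 0)"
  have a0: "\<alpha>0 \<in> perturbations eps A" unfolding perturbations_def \<alpha>0_def using eps_pos by auto
  have nn: "\<And>i j. X i j + \<alpha>0 i j \<ge> 0" using X_nonneg eps_pos unfolding \<alpha>0_def by (simp add: add_nonneg_nonneg)
  have G1: "G (\<lambda>i j. X i j + \<alpha>0 i j) = (\<lambda>i j. X i j + \<alpha>0 i j)" unfolding G_def by (rule gnn_nonneg[OF nn])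
  have G2: "G X = X" unfolding G_def by (rule gnn_nonneg[OF X_nonneg])
  have sB: "(\<Sum>i\<in>B. X i k + \<alpha>0 i k) = (\<Sum>i\<in>B. X i k)" for k
    using disj by (intro sum.cong) (auto simp: \<alpha>0_def)
  have sA: "(\<Sum>i\<in>A. X i k + \<alpha>0 i k) = (\<Sum>i\<in>A. X i k) + real (card A) * eps" for k
    by (simp add: sum.distrib \<alpha>0_def)
  have p1: "(\<Sum>i\<in>B. X i k) \<ge> 0" "(\<Sum>i\<in>A. X i k) \<ge> 0" for k
    using X_nonneg by (auto intro: sum_nonneg)
  have diffk: "h (\<lambda>i j. X i j + \<alpha>0 i j) k - h X k = real (card A) * real (card B) * eps / n" for k
  proof -
    have q1: "real (card A) * (\<Sum>i\<in>B. X i k) + real (card B) * ((\<Sum>i\<in>A. X i k) + real (card A) * eps) \<ge> 0"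
      using p1[of k] eps_pos by (intro add_nonneg_nonneg mult_nonneg_nonneg) auto
    have q2: "real (card A) * (\<Sum>i\<in>B. X i k) + real (card B) * (\<Sum>i\<in>A. X i k) \<ge> 0"
      using p1[of k] by (intro add_nonneg_nonneg mult_nonneg_nonneg) auto
    show ?thesis unfolding h_def G1 G2 sA sB relu_def using q1 q2 npos
      by (simp add: field_simps)
  qed
  have attained: "l1norm (\<lambda>k. h (\<lambda>i j. X i j + \<alpha>0 i j) k - h X k) = ?C"
    unfolding l1norm_def diffk using eps_pos npos by simp
  show ?thesis
    proof (rule cSup_eq_maximum)
    show "?C \<in> (\<lambda>\<alpha>. l1norm (\<lambda>k. h (\<lambda>i j. X i j + \<alpha> i j) k - h X k)) ` perturbations eps A"
      using a0 attained[symmetric] by (rule image_eqI[where x=\<alpha>0, rotated])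
  qed (use bound in blast)
qed

theorem theorem5:
  fixes E :: "'v::finite \<Rightarrow> 'v \<Rightarrow> bool"
    and S T :: "'v set"
    and X :: "'v \<Rightarrow> 'k::finite \<Rightarrow> real"
    and \<tau> L :: nat
    and eps \<delta> :: real
  assumes sym: "\<And>i j. E i j \<Longrightarrow> E j i"
    and irrefl: "\<And>i. \<not> E i i"
    and regular: "\<And>i. card {j. E i j} = \<tau>"
    and S_ne: "S \<noteq> {}" and T_ne: "T \<noteq> {}"
    and disj: "S \<inter> T = {}" and cover: "S \<union> T = UNIV"
    and X_nonneg: "\<And>i j. X i j \<ge> 0"
    and eps_pos: "eps > 0"
    and delta_pos: "\<delta> > 0"
  shows "\<exists>Ws W1 W2. length Ws = L
           \<and> (\<forall>w\<in>set Ws. norm11 (fst w) \<le> 1 \<and> norm11 (snd w) \<le> 1)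
           \<and> \<bar>eta E Ws W1 W2 S T X eps S / eta E Ws W1 W2 S T X eps T - 1\<bar> < \<delta>"
proof -
  define Ws where "Ws = replicate L (Id1 1 :: 'k \<Rightarrow> 'k \<Rightarrow> real, \<lambda>(_::'k) (_::'k). 0::real)"
  define W1 where "W1 = (Id1 (real (card S)) :: 'k \<Rightarrow> 'k \<Rightarrow> real)"
  define W2 where "W2 = (Id1 (real (card T)) :: 'k \<Rightarrow> 'k \<Rightarrow> real)"
  let ?G = "gnn E Ws"
  let ?n = "real (card (UNIV :: 'v set))"
  have gT_eq: "gT E Ws W1 W2 S T Y k =
      relu ((real (card S) * (\<Sum>i\<in>T. ?G Y i k) + real (card T) * (\<Sum>i\<in>S. ?G Y i k)) / ?n)" for Y k
    unfolding gT_def W1_def W2_def Id1_def patch_rep_def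
    apply (simp add: if_distrib add_divide_distrib cong: if_cong)
    by (metis mult.commute)
  have gT_eq2: "gT E Ws W1 W2 S T Y k =
      relu ((real (card T) * (\<Sum>i\<in>S. ?G Y i k) + real (card S) * (\<Sum>i\<in>T. ?G Y i k)) / ?n)" for Y k
    unfolding gT_eq by (simp add: add.commute)
  have eS: "eta E Ws W1 W2 S T X eps S = real (card (UNIV :: 'k set)) * real (card S) * real (card T) * eps / ?n"
    unfolding eta_def gT_eq unfolding Ws_def
    by (rule key[OF disj cover X_nonneg eps_pos])
  have eT: "eta E Ws W1 W2 S T X eps T = real (card (UNIV :: 'k set)) * real (card T) * real (card S) * eps / ?n"
    unfolding eta_def gT_eq2 unfolding Ws_def
  proof (rule key)
    show "T \<inter> S = {}" using disj by blast
    show "T \<union> S = UNIV" using cover by blast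
  qed (use X_nonneg eps_pos in auto)
  have pos: "real (card (UNIV :: 'k set)) * real (card S) * real (card T) * eps / ?n > 0"
    using S_ne T_ne eps_pos by (simp add: card_gt_0_iff)
  have n1: "norm11 (Id1 1 :: 'k \<Rightarrow> 'k \<Rightarrow> real) = 1"
  proof -
    have "range (\<lambda>k::'k. \<Sum>j\<in>UNIV. \<bar>Id1 1 j k :: real\<bar>) = {1}"
      by (auto simp: Id1_def if_distrib cong: if_cong)
    then show ?thesis unfolding norm11_def by simp
  qed
  have n0: "norm11 (\<lambda>_ _::'k. 0::real) = 0" unfolding norm11_def by simp
  have "\<bar>eta E Ws W1 W2 S T X eps S / eta E Ws W1 W2 S T X eps T - 1\<bar> = 0"
    unfolding eS eT using pos S_ne T_ne eps_pos by (simp add: mult_ac)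
  then show ?thesis using delta_pos n1 n0
    by (intro exI[of _ Ws] exI[of _ W1] exI[of _ W2]) (auto simp: Ws_def)
qed

end
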